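(* Let $B$ be an $M$-matrix with "property $c$" and $C$ an invertible $M$-matrix, and let $A=\begin{pmatrix}B&0\\0&C\end{pmatrix}$. Then $A^{\#}$ exists and is a Karamardian matrix.
   Context: An $M$-matrix is a matrix of the form $sI-D$ with $D\ge 0$ entrywise and $s\ge\rho(D)$ (spectral radius); it is invertible iff $s>\rho(D)$. An $M$-matrix $B$ has "property $c$" if it can be written $B=sI-D$ with $s>0$, $D\ge 0$, and $D/s$ semi-convergent (i.e. $\lim_{k\to\infty}(D/s)^k$ exists). The group inverse $A^{\#}$ is the unique $X$ with $AXA=A$, $XAX=X$, $AX=XA$. For $M\in\mathbb{R}^{n\times n}$ let $K_M=\mathbb{R}^n_+\cap R(M)$ and $K_M^*=\{y: x^Ty\ge 0\ \forall x\in K_M\}$ (one has $K_M^*=\mathbb{R}^n_++N(M^T)$, with interior $\{a+b: a>0,\ b\in N(M^T)\}$). For $q$, LCP$(M,K_M,q)$ is to find $x\in K_M$ with $Mx+q\in K_M^*$ and $x^T(Mx+q)=0$. $M$ is a Karamardian matrix if $K_M\ne\{0\}$ and there exists $d$ in the interior of $K_M^*$ such that both LCP$(M,K_M,0)$ and LCP$(M,K_M,d)$ have $x=0$ as their only solution. *)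

theory Defs
  imports "Jordan_Normal_Form.Spectral_Radius"
begin

definition nonneg_mat :: "real mat \<Rightarrow> bool" where
  "nonneg_mat D \<longleftrightarrow> (\<forall>i<dim_row D. \<forall>j<dim_col D. D $$ (i,j) \<ge> 0)"

definition nonneg_vec :: "real vec \<Rightarrow> bool" where
  "nonneg_vec x \<longleftrightarrow> (\<forall>i<dim_vec x. x $ i \<ge> 0)"

definition rho :: "real mat \<Rightarrow> real" where
  "rho D = spectral_radius (map_mat complex_of_real D)"

definition M_matrix :: "nat \<Rightarrow> real mat \<Rightarrow> bool" where
  "M_matrix n B \<longleftrightarrow> B \<in> carrier_mat n n \<and>
     (\<exists>s D. D \<in> carrier_mat n n \<and> nonneg_mat D \<and> s \<ge> rho D \<and>
            B = s \<cdot>\<^sub>m 1\<^sub>m n - D)"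

definition invertible_M_matrix :: "nat \<Rightarrow> real mat \<Rightarrow> bool" where
  "invertible_M_matrix n B \<longleftrightarrow> M_matrix n B \<and> invertible_mat B"

definition semi_convergent :: "nat \<Rightarrow> real mat \<Rightarrow> bool" where
  "semi_convergent n T \<longleftrightarrow> (\<forall>i<n. \<forall>j<n. convergent (\<lambda>k. (T ^\<^sub>m k) $$ (i,j)))"

definition property_c :: "nat \<Rightarrow> real mat \<Rightarrow> bool" where
  "property_c n B \<longleftrightarrow>
     (\<exists>s D. s > 0 \<and> D \<in> carrier_mat n n \<and> nonneg_mat D \<and>
            B = s \<cdot>\<^sub>m 1\<^sub>m n - D \<and> semi_convergent n ((1 / s) \<cdot>\<^sub>m D))"

definition group_inverse :: "real mat \<Rightarrow> real mat \<Rightarrow> bool" where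
  "group_inverse A X \<longleftrightarrow> X \<in> carrier_mat (dim_row A) (dim_row A) \<and>
     A * X * A = A \<and> X * A * X = X \<and> A * X = X * A"

definition range_mat :: "nat \<Rightarrow> real mat \<Rightarrow> real vec set" where
  "range_mat n M = {M *\<^sub>v x | x. x \<in> carrier_vec n}"

definition K_cone :: "nat \<Rightarrow> real mat \<Rightarrow> real vec set" where
  "K_cone n M = {x \<in> carrier_vec n. nonneg_vec x} \<inter> range_mat n M"

definition K_dual :: "nat \<Rightarrow> real mat \<Rightarrow> real vec set" where
  "K_dual n M = {y \<in> carrier_vec n. \<forall>x\<in>K_cone n M. x \<bullet> y \<ge> 0}"

definition interior_vec :: "nat \<Rightarrow> real vec set \<Rightarrow> real vec set" where
  "interior_vec n S = {d \<in> carrier_vec n. \<exists>e>0. \<forall>y\<in>carrier_vec n.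
        (\<forall>i<n. \<bar>y $ i - d $ i\<bar> < e) \<longrightarrow> y \<in> S}"

definition LCP_sol :: "nat \<Rightarrow> real mat \<Rightarrow> real vec \<Rightarrow> real vec \<Rightarrow> bool" where
  "LCP_sol n M q x \<longleftrightarrow> x \<in> K_cone n M \<and> M *\<^sub>v x + q \<in> K_dual n M \<and>
     x \<bullet> (M *\<^sub>v x + q) = 0"

definition Karamardian :: "nat \<Rightarrow> real mat \<Rightarrow> bool" where
  "Karamardian n M \<longleftrightarrow> M \<in> carrier_mat n n \<and> K_cone n M \<noteq> {0\<^sub>v n} \<and>
     (\<exists>d \<in> interior_vec n (K_dual n M).
        (\<forall>x. LCP_sol n M (0\<^sub>v n) x \<longrightarrow> x = 0\<^sub>v n) \<and>
        (\<forall>x. LCP_sol n M d x \<longrightarrow> x = 0\<^sub>v n))"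

end

theory Submission
  imports Defs
begin


lemma mult_entry: assumes "A \<in> carrier_mat n n" "B \<in> carrier_mat n n" "i<n" "j<n"
  shows "(A*B)$$(i,j) = (\<Sum>l<n. A$$(i,l) * B$$(l,j))"
  using assms by (simp add: scalar_prod_def lessThan_atLeast0)

lemma mult_vec_entry: assumes "A \<in> carrier_mat n n" "v \<in> carrier_vec n" "i<n"
  shows "(A *\<^sub>v v)$i = (\<Sum>l<n. A$$(i,l) * v$l)"
  using assms by (simp add: scalar_prod_def lessThan_atLeast0)

lemma lim_mult_right:
  fixes F :: "nat \<Rightarrow> real mat"
  assumes F: "\<And>k. F k \<in> carrier_mat n n" and G: "G \<in> carrier_mat n n"
   and conv: "\<And>i j. i<n \<Longrightarrow> j<n \<Longrightarrow> (\<lambda>k. F k $$ (i,j)) \<longlonglongrightarrow> L $$ (i,j)"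
   and L: "L \<in> carrier_mat n n" and ij: "i<n" "j<n"
  shows "(\<lambda>k. (F k * G) $$ (i,j)) \<longlonglongrightarrow> (L * G) $$ (i,j)"
proof -
  have e: "(\<lambda>k. (F k * G) $$ (i,j)) = (\<lambda>k. \<Sum>l<n. F k $$(i,l) * G$$(l,j))"
    using mult_entry[OF F G ij] by auto
  show ?thesis unfolding e mult_entry[OF L G ij]
    by (rule tendsto_sum, rule tendsto_mult, insert conv ij, auto)
qed

lemma lim_mult_left:
  fixes F :: "nat \<Rightarrow> real mat"
  assumes F: "\<And>k. F k \<in> carrier_mat n n" and G: "G \<in> carrier_mat n n"
   and conv: "\<And>i j. i<n \<Longrightarrow> j<n \<Longrightarrow> (\<lambda>k. F k $$ (i,j)) \<longlonglongrightarrow> L $$ (i,j)"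
   and L: "L \<in> carrier_mat n n" and ij: "i<n" "j<n"
  shows "(\<lambda>k. (G * F k) $$ (i,j)) \<longlonglongrightarrow> (G * L) $$ (i,j)"
proof -
  have e: "(\<lambda>k. (G * F k) $$ (i,j)) = (\<lambda>k. \<Sum>l<n. G $$(i,l) * F k$$(l,j))"
    using mult_entry[OF G F ij] by auto
  show ?thesis unfolding e mult_entry[OF G L ij]
    by (rule tendsto_sum, rule tendsto_mult, insert conv ij, auto)
qed

lemma lim_mult_vec:
  fixes F :: "nat \<Rightarrow> real mat"
  assumes F: "\<And>k. F k \<in> carrier_mat n n" and v: "v \<in> carrier_vec n"
   and conv: "\<And>i j. i<n \<Longrightarrow> j<n \<Longrightarrow> (\<lambda>k. F k $$ (i,j)) \<longlonglongrightarrow> L $$ (i,j)"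
   and L: "L \<in> carrier_mat n n" and i: "i<n"
  shows "(\<lambda>k. (F k *\<^sub>v v) $ i) \<longlonglongrightarrow> (L *\<^sub>v v) $ i"
proof -
  have e: "(\<lambda>k. (F k *\<^sub>v v) $ i) = (\<lambda>k. \<Sum>l<n. F k $$(i,l) * v$l)"
    using mult_vec_entry[OF F v i] by auto
  show ?thesis unfolding e mult_vec_entry[OF L v i]
    by (rule tendsto_sum, rule tendsto_mult, insert conv i, auto)
qed

lemma nonneg_mult: assumes "A \<in> carrier_mat n n" "B \<in> carrier_mat n n" "nonneg_mat A" "nonneg_mat B"
  shows "nonneg_mat (A*B)"
  unfolding nonneg_mat_def
proof (intro allI impI)
  fix i j assume "i < dim_row (A*B)" "j < dim_col (A*B)"
  hence ij: "i<n" "j<n" using assms by auto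
  show "0 \<le> (A*B)$$(i,j)" unfolding mult_entry[OF assms(1,2) ij]
    using assms ij by (intro sum_nonneg mult_nonneg_nonneg, auto simp: nonneg_mat_def)
qed

lemma nonneg_pow: assumes "A \<in> carrier_mat n n" "nonneg_mat A"
  shows "nonneg_mat (A ^\<^sub>m k)"
proof (induct k)
  case 0 then show ?case using assms by (auto simp: nonneg_mat_def)
next
  case (Suc k) then show ?case using nonneg_mult[OF pow_carrier_mat[OF assms(1)] assms(1)] assms by auto
qed

lemma nonneg_mult_vec: assumes "A \<in> carrier_mat n n" "v \<in> carrier_vec n" "nonneg_mat A" "nonneg_vec v"
  shows "nonneg_vec (A *\<^sub>v v)"
  unfolding nonneg_vec_def
proof (intro allI impI)
  fix i assume "i < dim_vec (A *\<^sub>v v)"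
  hence i: "i<n" using assms by auto
  show "0 \<le> (A *\<^sub>v v)$i" unfolding mult_vec_entry[OF assms(1,2) i]
    using assms i by (intro sum_nonneg mult_nonneg_nonneg, auto simp: nonneg_mat_def nonneg_vec_def)
qed

lemma assoc_n: assumes "A \<in> carrier_mat n n" "B \<in> carrier_mat n n" "C \<in> carrier_mat n n"
  shows "A * B * C = A * (B * C)" using assms by (rule assoc_mult_mat)

lemma pow_comm: assumes "T \<in> carrier_mat n n" shows "T * T ^\<^sub>m k = T ^\<^sub>m k * T"
proof (induct k)
  case 0 then show ?case using assms by simp
next
  case (Suc k)
  have "T * T ^\<^sub>m Suc k = (T * T ^\<^sub>m k) * T" using assms by (simp add: assoc_n[where n=n])
  also have "\<dots> = T ^\<^sub>m Suc k * T" using Suc by simp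
  finally show ?case .
qed

lemma group_inverse_unique:
  assumes A: "A \<in> carrier_mat n n" and X: "X \<in> carrier_mat n n" and Y: "Y \<in> carrier_mat n n"
   and 1: "A * X * A = A" "X * A * X = X" "A * X = X * A"
   and 2: "A * Y * A = A" "Y * A * Y = Y" "A * Y = Y * A"
  shows "X = Y"
proof -
  have "X * A = X * (A * Y * A)" using 2 by simp
  also have "\<dots> = (X * A) * (Y * A)" using A X Y by (simp add: assoc_n[where n=n])
  also have "\<dots> = (X * A) * (A * Y)" using 2(3) by simp
  also have "\<dots> = (A * X * A) * Y" using A X Y 1(3) by (simp add: assoc_n[where n=n])
  also have "\<dots> = A * Y" using 1 by simp
  finally have XA: "X * A = A * Y" .
  have "X = X * A * X" using 1 by simp
  also have "\<dots> = Y * (A * X)" using XA 2(3) A X Y by (simp add: assoc_n[where n=n])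
  also have "\<dots> = Y * (A * Y)" using XA 1(3) A X Y by (simp add: assoc_n[where n=n])
  also have "\<dots> = Y" using 2 A Y by (simp add: assoc_n[where n=n])
  finally show ?thesis .
qed



lemma dist_n:
  fixes A B C :: "real mat"
  assumes "A \<in> carrier_mat n n" "B \<in> carrier_mat n n" "C \<in> carrier_mat n n"
  shows "A*(B+C) = A*B + A*C" "A*(B-C) = A*B - A*C" "(A+B)*C = A*C + B*C" "(A-B)*C = A*C - B*C"
  using assms by (auto simp: mult_add_distrib_mat add_mult_distrib_mat mult_minus_distrib_mat minus_mult_distrib_mat)

lemma dist_vec_n:
  fixes A B :: "real mat"
  assumes "A \<in> carrier_mat n n" "B \<in> carrier_mat n n" "v \<in> carrier_vec n"
  shows "(A+B) *\<^sub>v v = A *\<^sub>v v + B *\<^sub>v v" "(A-B) *\<^sub>v v = A *\<^sub>v v - B *\<^sub>v v"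
  using assms by (auto simp: add_mult_distrib_mat_vec minus_mult_distrib_mat_vec)

locale semiconv =
  fixes n :: nat and T :: "real mat"
  assumes T: "T \<in> carrier_mat n n" and Tnn: "nonneg_mat T" and sc: "semi_convergent n T"
begin

definition Q where "Q = mat n n (\<lambda>(i,j). lim (\<lambda>k. (T ^\<^sub>m k) $$ (i,j)))"

lemma Q: "Q \<in> carrier_mat n n" unfolding Q_def by simp

lemma dims[simp]: "dim_row T = n" "dim_col T = n" "dim_row Q = n" "dim_col Q = n"
  using T Q by auto

lemma Q_lim: "i<n \<Longrightarrow> j<n \<Longrightarrow> (\<lambda>k. (T ^\<^sub>m k)$$(i,j)) \<longlonglongrightarrow> Q$$(i,j)"
  using sc unfolding semi_convergent_def Q_def by (simp add: convergent_LIMSEQ_iff)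

lemma QT: "Q * T = Q"
proof (rule eq_matI)
  fix i j assume "i < dim_row Q" "j < dim_col Q"
  hence ij: "i<n" "j<n" using Q by auto
  have 1: "(\<lambda>k. (T ^\<^sub>m k * T)$$(i,j)) \<longlonglongrightarrow> (Q*T)$$(i,j)"
    by (rule lim_mult_right[OF pow_carrier_mat[OF T] T Q_lim Q ij])
  have 2: "(\<lambda>k. (T ^\<^sub>m k * T)$$(i,j)) \<longlonglongrightarrow> Q$$(i,j)"
    using LIMSEQ_Suc[OF Q_lim[OF ij]] by simp
  show "(Q*T)$$(i,j) = Q$$(i,j)" using LIMSEQ_unique[OF 1 2] .
qed (use Q T in auto)

lemma TQ: "T * Q = Q"
proof (rule eq_matI)
  fix i j assume "i < dim_row Q" "j < dim_col Q"
  hence ij: "i<n" "j<n" using Q by auto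
  have 1: "(\<lambda>k. (T * T ^\<^sub>m k)$$(i,j)) \<longlonglongrightarrow> (T*Q)$$(i,j)"
    by (rule lim_mult_left[OF pow_carrier_mat[OF T] T Q_lim Q ij])
  have 2: "(\<lambda>k. (T * T ^\<^sub>m k)$$(i,j)) \<longlonglongrightarrow> Q$$(i,j)"
    using LIMSEQ_Suc[OF Q_lim[OF ij]] by (simp add: pow_comm[OF T])
  show "(T*Q)$$(i,j) = Q$$(i,j)" using LIMSEQ_unique[OF 1 2] .
qed (use Q T in auto)

lemma powQ: "T ^\<^sub>m k * Q = Q"
proof (induct k)
  case 0 then show ?case using Q by simp
next
  case (Suc k)
  have "T ^\<^sub>m Suc k * Q = T ^\<^sub>m k * (T * Q)" using T Q by (simp add: assoc_n[where n=n])
  then show ?case using Suc TQ by simp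
qed

lemma QQ: "Q * Q = Q"
proof (rule eq_matI)
  fix i j assume "i < dim_row Q" "j < dim_col Q"
  hence ij: "i<n" "j<n" using Q by auto
  have 1: "(\<lambda>k. (T ^\<^sub>m k * Q)$$(i,j)) \<longlonglongrightarrow> (Q*Q)$$(i,j)"
    by (rule lim_mult_right[OF pow_carrier_mat[OF T] Q Q_lim Q ij])
  have 2: "(\<lambda>k. (T ^\<^sub>m k * Q)$$(i,j)) \<longlonglongrightarrow> Q$$(i,j)"
    unfolding powQ by simp
  show "(Q*Q)$$(i,j) = Q$$(i,j)" using LIMSEQ_unique[OF 1 2] .
qed (use Q T in auto)

lemma Q_vec_lim: "v \<in> carrier_vec n \<Longrightarrow> i<n \<Longrightarrow> (\<lambda>k. (T ^\<^sub>m k *\<^sub>v v)$i) \<longlonglongrightarrow> (Q *\<^sub>v v)$i"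
  by (rule lim_mult_vec[OF pow_carrier_mat[OF T] _ Q_lim Q])

definition Mn where "Mn = 1\<^sub>m n - T + Q"

lemma Mn: "Mn \<in> carrier_mat n n" unfolding Mn_def using T Q by simp

lemma QMn: "Q * Mn = Q"
proof -
  have "Q * Mn = Q * 1\<^sub>m n - Q * T + Q * Q" unfolding Mn_def using T Q by (simp add: dist_n[where n=n] minus_carrier_mat)
  also have "\<dots> = Q" unfolding QT QQ using Q by (intro eq_matI, auto)
  finally show ?thesis .
qed

lemma MnQ: "Mn * Q = Q"
proof -
  have "Mn * Q = 1\<^sub>m n * Q - T * Q + Q * Q" unfolding Mn_def using T Q by (simp add: dist_n[where n=n] minus_carrier_mat)
  also have "\<dots> = Q" unfolding TQ QQ using Q by (intro eq_matI, auto)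
  finally show ?thesis .
qed

lemma Mn_inj: assumes v: "v \<in> carrier_vec n" and z: "Mn *\<^sub>v v = 0\<^sub>v n" shows "v = 0\<^sub>v n"
proof -
  have "Q *\<^sub>v v = (Q * Mn) *\<^sub>v v" unfolding QMn ..
  also have "\<dots> = Q *\<^sub>v (Mn *\<^sub>v v)" using Q Mn v by (rule assoc_mult_mat_vec)
  also have "\<dots> = 0\<^sub>v n" unfolding z using Q by (intro eq_vecI, auto simp: scalar_prod_def)
  finally have Qv: "Q *\<^sub>v v = 0\<^sub>v n" .
  have "Mn *\<^sub>v v = v - T *\<^sub>v v + Q *\<^sub>v v" unfolding Mn_def using T Q v
    by (simp add: dist_vec_n[where n=n] minus_carrier_mat)
  hence z2: "v - T *\<^sub>v v = 0\<^sub>v n" using z Qv v T by simp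
  have Tv: "T *\<^sub>v v = v"
  proof (rule eq_vecI)
    fix i assume "i < dim_vec v"
    hence i: "i < n" using v by simp
    have "(v - T *\<^sub>v v) $ i = 0" unfolding z2 using i by simp
    thus "(T *\<^sub>v v) $ i = v $ i" using i v by simp
  qed (use v in simp)
  have pw: "T ^\<^sub>m k *\<^sub>v v = v" for k
  proof (induct k)
    case 0 then show ?case using v by simp
  next
    case (Suc k)
    have "T ^\<^sub>m Suc k *\<^sub>v v = T ^\<^sub>m k *\<^sub>v (T *\<^sub>v v)" using T v by (simp add: assoc_mult_mat_vec[of _ n n])
    then show ?case using Suc Tv by simp
  qed
  show ?thesis
  proof (rule eq_vecI)
    fix i assume "i < dim_vec (0\<^sub>v n :: real vec)"
    hence i: "i<n" by simp
    have "(\<lambda>k. (T ^\<^sub>m k *\<^sub>v v)$i) \<longlonglongrightarrow> (Q *\<^sub>v v)$i" by (rule Q_vec_lim[OF v i])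
    hence "(\<lambda>k. v$i) \<longlonglongrightarrow> 0" unfolding pw Qv using i by simp
    thus "v $ i = 0\<^sub>v n $ i" using i LIMSEQ_const_iff by auto
  qed (use v in auto)
qed

end


context semiconv begin

lemma det_Mn: "det Mn \<noteq> 0"
  using Mn_inj det_0_iff_vec_prod_zero[OF Mn] by auto

definition W where "W = (SOME W. W \<in> carrier_mat n n \<and> W * Mn = 1\<^sub>m n \<and> Mn * W = 1\<^sub>m n)"

lemma W_ex: "\<exists>W. W \<in> carrier_mat n n \<and> W * Mn = 1\<^sub>m n \<and> Mn * W = 1\<^sub>m n"
proof -
  have "Mn \<in> Units (ring_mat TYPE(real) n ())" by (rule det_non_zero_imp_unit[OF Mn det_Mn])
  thus ?thesis unfolding Units_def ring_mat_def by auto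
qed

lemma W: "W \<in> carrier_mat n n" "W * Mn = 1\<^sub>m n" "Mn * W = 1\<^sub>m n"
  using someI_ex[OF W_ex] unfolding W_def by auto

lemma QW: "Q * W = Q"
proof -
  have "Q * W = (Q * Mn) * W" unfolding QMn ..
  also have "\<dots> = Q * (Mn * W)" using Q Mn W by (simp add: assoc_n[where n=n])
  finally show ?thesis using W Q by simp
qed

lemma WQ: "W * Q = Q"
proof -
  have "W * Q = W * (Mn * Q)" unfolding MnQ ..
  also have "\<dots> = (W * Mn) * Q" by (rule assoc_n[OF W(1) Mn Q, symmetric])
  finally show ?thesis using W Q by simp
qed

definition P where "P = 1\<^sub>m n - T"
definition G0 where "G0 = W - Q"

lemma P: "P \<in> carrier_mat n n" unfolding P_def using T by (simp add: minus_carrier_mat)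
lemma G0: "G0 \<in> carrier_mat n n" unfolding G0_def using W Q by (simp add: minus_carrier_mat)

lemma P_eq: "P = Mn - Q" unfolding P_def Mn_def using T Q by (intro eq_matI, auto)

lemma PQ: "P * Q = 0\<^sub>m n n"
proof -
  have "P * Q = 1\<^sub>m n * Q - T * Q" unfolding P_def using T Q by (simp add: dist_n[where n=n])
  thus ?thesis unfolding TQ using Q by simp
qed

lemma QP: "Q * P = 0\<^sub>m n n"
proof -
  have "Q * P = Q * 1\<^sub>m n - Q * T" unfolding P_def using T Q by (simp add: dist_n[where n=n])
  thus ?thesis unfolding QT using Q by simp
qed

lemma PG0: "P * G0 = 1\<^sub>m n - Q"
proof -
  have "P * G0 = P * W - P * Q" unfolding G0_def using P W Q by (simp add: dist_n[where n=n])
  also have "P * W = Mn * W - Q * W" unfolding P_eq using Mn W Q by (simp add: dist_n[where n=n])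
  finally show ?thesis unfolding PQ QW W(3) using Q by (intro eq_matI, auto)
qed

lemma G0P: "G0 * P = 1\<^sub>m n - Q"
proof -
  have "G0 * P = W * P - Q * P" unfolding G0_def using P W Q by (simp add: dist_n[where n=n])
  also have "W * P = W * Mn - W * Q" unfolding P_eq using Mn W Q by (simp add: dist_n[where n=n])
  finally show ?thesis unfolding QP WQ W(2) using Q by (intro eq_matI, auto)
qed

lemma QG0: "Q * G0 = 0\<^sub>m n n"
proof -
  have "Q * G0 = Q * W - Q * Q" unfolding G0_def using W Q by (simp add: dist_n[where n=n])
  thus ?thesis unfolding QW QQ using Q by simp
qed

lemma G0_ge: assumes y: "y \<in> carrier_vec n" and ynn: "nonneg_vec y" and Qy: "Q *\<^sub>v y = 0\<^sub>v n"
  and i: "i < n"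
  shows "y $ i \<le> (G0 *\<^sub>v y) $ i"
proof -
  define z where "z = W *\<^sub>v y"
  have z: "z \<in> carrier_vec n" unfolding z_def using W y by simp
  have G0y: "G0 *\<^sub>v y = z - Q *\<^sub>v y" unfolding G0_def z_def using W Q y by (simp add: dist_vec_n[where n=n])
  have "Mn *\<^sub>v z = (Mn * W) *\<^sub>v y" unfolding z_def by (rule assoc_mult_mat_vec[OF Mn W(1) y, symmetric])
  hence Mnz: "Mn *\<^sub>v z = y" using W y by simp
  have "Q *\<^sub>v z = (Q * W) *\<^sub>v y" unfolding z_def by (rule assoc_mult_mat_vec[OF Q W(1) y, symmetric])
  hence Qz: "Q *\<^sub>v z = 0\<^sub>v n" unfolding QW Qy .
  have "Mn *\<^sub>v z = z - T *\<^sub>v z + Q *\<^sub>v z" unfolding Mn_def using T Q z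
    by (simp add: dist_vec_n[where n=n] minus_carrier_mat)
  hence yz: "y = z - T *\<^sub>v z + 0\<^sub>v n" unfolding Mnz Qz .
  have Tz: "T *\<^sub>v z = z - y"
  proof (rule eq_vecI)
    fix i assume "i < dim_vec (z - y)"
    hence i: "i < n" using z y by simp
    have "y $ i = (z - T *\<^sub>v z + 0\<^sub>v n) $ i" using yz by simp
    thus "(T *\<^sub>v z) $ i = (z - y) $ i" using i z y T by simp
  qed (use z y T in simp)
  have step: "(T ^\<^sub>m Suc (Suc N) *\<^sub>v z) $ i \<le> (T ^\<^sub>m Suc N *\<^sub>v z) $ i" if i: "i < n" for N i
  proof -
    have "T ^\<^sub>m Suc (Suc N) *\<^sub>v z = (T ^\<^sub>m Suc N * T) *\<^sub>v z" by simp
    also have "\<dots> = T ^\<^sub>m Suc N *\<^sub>v (T *\<^sub>v z)"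
      by (rule assoc_mult_mat_vec[OF pow_carrier_mat[OF T] T z])
    also have "\<dots> = T ^\<^sub>m Suc N *\<^sub>v z - T ^\<^sub>m Suc N *\<^sub>v y" unfolding Tz
      by (rule mult_minus_distrib_mat_vec[OF pow_carrier_mat[OF T] z y])
    finally have e: "T ^\<^sub>m Suc (Suc N) *\<^sub>v z = T ^\<^sub>m Suc N *\<^sub>v z - T ^\<^sub>m Suc N *\<^sub>v y" .
    have "nonneg_vec (T ^\<^sub>m Suc N *\<^sub>v y)"
      by (rule nonneg_mult_vec[OF pow_carrier_mat[OF T] y nonneg_pow[OF T Tnn] ynn])
    hence "0 \<le> (T ^\<^sub>m Suc N *\<^sub>v y) $ i" using i T unfolding nonneg_vec_def by simp
    thus ?thesis unfolding e using i T z y by simp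
  qed
  have bound: "y $ i + (T ^\<^sub>m Suc N *\<^sub>v z) $ i \<le> z $ i" for N
  proof (induct N)
    case 0
    have "T ^\<^sub>m Suc 0 = T" using T by simp
    hence e: "T ^\<^sub>m Suc 0 *\<^sub>v z = z - y" using Tz by simp
    show ?case unfolding e using i z y by simp
  next
    case (Suc N)
    then show ?case using step[OF i, of N] by simp
  qed
  have lim: "(\<lambda>N. y $ i + (T ^\<^sub>m Suc N *\<^sub>v z) $ i) \<longlonglongrightarrow> y $ i + (Q *\<^sub>v z) $ i"
    by (intro tendsto_add tendsto_const LIMSEQ_Suc[OF Q_vec_lim[OF z i]])
  have "y $ i + (Q *\<^sub>v z) $ i \<le> z $ i"
    by (rule LIMSEQ_le_const2[OF lim], use bound in auto)
  thus ?thesis unfolding G0y Qy Qz using i z by simp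
qed

end


locale semiconv_S = semiconv +
  fixes S Sinv :: "real mat" and c :: real
  assumes S: "S \<in> carrier_mat n n" and Sinv: "Sinv \<in> carrier_mat n n"
    and SSinv: "S * Sinv = 1\<^sub>m n" and SinvS: "Sinv * S = 1\<^sub>m n"
    and ST: "S * T = T * S" and Sinv_nn: "nonneg_mat Sinv" and c: "c > 0"
    and Sinv_quad: "\<And>x. x \<in> carrier_vec n \<Longrightarrow> nonneg_vec x \<Longrightarrow> c * (x \<bullet> x) \<le> x \<bullet> (Sinv *\<^sub>v x)"
begin

lemma S_pow: "S * T ^\<^sub>m k = T ^\<^sub>m k * S"
proof (induct k)
  case 0 then show ?case using S by simp
next
  case (Suc k)
  have "S * T ^\<^sub>m Suc k = (S * T ^\<^sub>m k) * T" using S T by (simp add: assoc_n[where n=n])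
  also have "\<dots> = T ^\<^sub>m k * (S * T)" unfolding Suc using S T by (simp add: assoc_n[where n=n])
  also have "\<dots> = (T ^\<^sub>m k * T) * S" unfolding ST using S T by (simp add: assoc_n[where n=n])
  finally show ?case by simp
qed

lemma SQ: "S * Q = Q * S"
proof (rule eq_matI)
  fix i j assume "i < dim_row (Q * S)" "j < dim_col (Q * S)"
  hence ij: "i<n" "j<n" using S by auto
  have 1: "(\<lambda>k. (S * T ^\<^sub>m k)$$(i,j)) \<longlonglongrightarrow> (S*Q)$$(i,j)"
    by (rule lim_mult_left[OF pow_carrier_mat[OF T] S Q_lim Q ij])
  have 2: "(\<lambda>k. (T ^\<^sub>m k * S)$$(i,j)) \<longlonglongrightarrow> (Q*S)$$(i,j)"
    by (rule lim_mult_right[OF pow_carrier_mat[OF T] S Q_lim Q ij])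
  show "(S*Q)$$(i,j) = (Q*S)$$(i,j)" using LIMSEQ_unique[OF 1 2[folded S_pow]] .
qed (use Q S in auto)

lemma SinvQ: "Sinv * Q = Q * Sinv"
proof -
  have "Sinv * Q = Sinv * Q * (S * Sinv)" using Sinv Q by (simp add: SSinv)
  also have "\<dots> = Sinv * (Q * S) * Sinv" using Sinv Q S by (simp add: assoc_n[where n=n])
  also have "\<dots> = Sinv * (S * Q) * Sinv" unfolding SQ ..
  also have "\<dots> = (Sinv * S) * Q * Sinv" using Sinv Q S by (simp add: assoc_n[where n=n])
  finally show ?thesis using Q Sinv by (simp add: SinvS)
qed

definition A0 where "A0 = S * P"
definition G where "G = G0 * Sinv"

lemma A0: "A0 \<in> carrier_mat n n" unfolding A0_def using S P by simp
lemma G: "G \<in> carrier_mat n n" unfolding G_def using G0 Sinv by simp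

lemma AG: "A0 * G = 1\<^sub>m n - Q"
proof -
  have "A0 * G = S * ((P * G0) * Sinv)" unfolding A0_def G_def using S P G0 Sinv
    by (simp add: assoc_n[where n=n])
  also have "\<dots> = S * Sinv - (S * Q) * Sinv" unfolding PG0 using S Q Sinv
    by (simp add: dist_n[where n=n] assoc_n[where n=n] minus_carrier_mat)
  also have "\<dots> = S * Sinv - (Q * S) * Sinv" unfolding SQ ..
  also have "\<dots> = S * Sinv - Q * (S * Sinv)" by (subst assoc_n[OF Q S Sinv], rule refl)
  finally show ?thesis using SSinv Q by simp
qed

lemma GA: "G * A0 = 1\<^sub>m n - Q"
proof -
  have "G * A0 = G0 * ((Sinv * S) * P)" unfolding A0_def G_def using S P G0 Sinv
    by (simp add: assoc_n[where n=n])
  also have "\<dots> = G0 * P" using P by (simp add: SinvS)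
  finally show ?thesis using G0P by simp
qed

lemma AGA: "A0 * G * A0 = A0"
proof -
  have "A0 * G * A0 = (1\<^sub>m n - Q) * A0" unfolding AG ..
  also have "\<dots> = (1\<^sub>m n - Q) * (S * P)" unfolding A0_def ..
  also have "\<dots> = S * P - (Q * S) * P" using Q S P by (simp add: dist_n[where n=n] assoc_n[where n=n])
  also have "\<dots> = S * P - S * (Q * P)" unfolding SQ[symmetric] using Q S P by (simp add: assoc_n[where n=n])
  also have "\<dots> = S * P" unfolding QP using S P by (intro eq_matI, auto)
  finally show ?thesis unfolding A0_def .
qed

lemma GAG: "G * A0 * G = G"
proof -
  have "G * A0 * G = (1\<^sub>m n - Q) * G" unfolding GA ..
  also have "\<dots> = (1\<^sub>m n - Q) * (G0 * Sinv)" unfolding G_def ..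
  also have "\<dots> = G0 * Sinv - (Q * G0) * Sinv" using Q G0 Sinv by (simp add: dist_n[where n=n] assoc_n[where n=n])
  also have "\<dots> = G0 * Sinv" unfolding QG0 using G0 Sinv by (intro eq_matI, auto)
  finally show ?thesis unfolding G_def .
qed

lemma group_inv: "group_inverse A0 G"
  unfolding group_inverse_def using A0 G AGA GAG AG GA by auto

lemma quad: assumes x: "x \<in> carrier_vec n" and xnn: "nonneg_vec x" and w: "w \<in> carrier_vec n"
  and xw: "x = G *\<^sub>v w"
  shows "c * (x \<bullet> x) \<le> x \<bullet> (G *\<^sub>v x)"
proof -
  have "Q *\<^sub>v x = (Q * G0) *\<^sub>v (Sinv *\<^sub>v w)" unfolding xw G_def using Q G0 Sinv w
    by (simp add: assoc_mult_mat_vec[of _ n n])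
  hence Qx: "Q *\<^sub>v x = 0\<^sub>v n" unfolding QG0 using Sinv w by (intro eq_vecI, auto simp: scalar_prod_def)
  define y where "y = Sinv *\<^sub>v x"
  have y: "y \<in> carrier_vec n" unfolding y_def using Sinv x by simp
  have ynn: "nonneg_vec y" unfolding y_def by (rule nonneg_mult_vec[OF Sinv x Sinv_nn xnn])
  have "Q *\<^sub>v y = (Q * Sinv) *\<^sub>v x" unfolding y_def by (rule assoc_mult_mat_vec[OF Q Sinv x, symmetric])
  also have "\<dots> = Sinv *\<^sub>v (Q *\<^sub>v x)" unfolding SinvQ[symmetric] by (rule assoc_mult_mat_vec[OF Sinv Q x])
  finally have Qy: "Q *\<^sub>v y = 0\<^sub>v n" unfolding Qx using Sinv by (intro eq_vecI, auto simp: scalar_prod_def)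
  have Gx: "G *\<^sub>v x = G0 *\<^sub>v y" unfolding G_def y_def by (rule assoc_mult_mat_vec[OF G0 Sinv x])
  have "x \<bullet> y \<le> x \<bullet> (G0 *\<^sub>v y)"
    unfolding scalar_prod_def using x y G0 G0_ge[OF y ynn Qy] xnn
    by (auto intro!: sum_mono mult_left_mono simp: nonneg_vec_def)
  moreover have "c * (x \<bullet> x) \<le> x \<bullet> y" unfolding y_def by (rule Sinv_quad[OF x xnn])
  ultimately show ?thesis unfolding Gx by simp
qed

lemma Karam: assumes j: "j < n" and Qj: "\<And>i. i < n \<Longrightarrow> Q $$ (i,j) = 0"
  shows "Karamardian n G"
proof -
  have Kpos: "c * (x \<bullet> x) \<le> x \<bullet> (G *\<^sub>v x)" if "x \<in> K_cone n G" for x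
    using that quad unfolding K_cone_def range_mat_def by auto
  have xx: "x = 0\<^sub>v n" if "x \<in> carrier_vec n" "x \<bullet> x \<le> 0" for x :: "real vec"
  proof (rule eq_vecI)
    fix i assume "i < dim_vec (0\<^sub>v n :: real vec)"
    hence i: "i < n" by simp
    have "x \<bullet> x = (\<Sum>l\<in>{0..<n}. x $ l * x $ l)" using that unfolding scalar_prod_def by simp
    hence "(\<Sum>l\<in>{0..<n}. x $ l * x $ l) = 0" using that
      by (metis (no_types, lifting) antisym sum_nonneg zero_le_square)
    hence "\<forall>l\<in>{0..<n}. x $ l * x $ l = 0" by (subst (asm) sum_nonneg_eq_0_iff, auto)
    thus "x $ i = 0\<^sub>v n $ i" using i by auto
  qed (use that in auto)
  define d :: "real vec" where "d = vec n (\<lambda>_. 1)"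
  have d: "d \<in> carrier_vec n" unfolding d_def by simp
  have xd: "0 \<le> x \<bullet> d" if "x \<in> K_cone n G" for x
    using that unfolding K_cone_def d_def scalar_prod_def nonneg_vec_def by (auto intro!: sum_nonneg)
  have dint: "d \<in> interior_vec n (K_dual n G)"
    unfolding interior_vec_def
  proof (intro CollectI conjI exI[of _ 1] ballI impI d)
    fix y :: "real vec" assume y: "y \<in> carrier_vec n" and near: "\<forall>i<n. \<bar>y $ i - d $ i\<bar> < 1"
    have ypos: "i < n \<Longrightarrow> 0 \<le> y $ i" for i using near unfolding d_def by force
    show "y \<in> K_dual n G" unfolding K_dual_def using y ypos
      by (auto simp: K_cone_def scalar_prod_def nonneg_vec_def intro!: sum_nonneg)
  qed simp
  have sol0: "x = 0\<^sub>v n" if "LCP_sol n G (0\<^sub>v n) x" for x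
  proof -
    from that have xK: "x \<in> K_cone n G" and e: "x \<bullet> (G *\<^sub>v x + 0\<^sub>v n) = 0" unfolding LCP_sol_def by auto
    have xc: "x \<in> carrier_vec n" using xK unfolding K_cone_def by auto
    have "x \<bullet> (G *\<^sub>v x) = 0" using e xc G by simp
    hence "x \<bullet> x \<le> 0" using Kpos[OF xK] c by (simp add: mult_le_0_iff)
    thus ?thesis using xx xc by auto
  qed
  have sold: "x = 0\<^sub>v n" if "LCP_sol n G d x" for x
  proof -
    from that have xK: "x \<in> K_cone n G" and e: "x \<bullet> (G *\<^sub>v x + d) = 0" unfolding LCP_sol_def by auto
    have xc: "x \<in> carrier_vec n" using xK unfolding K_cone_def by auto
    have "x \<bullet> (G *\<^sub>v x + d) = x \<bullet> (G *\<^sub>v x) + x \<bullet> d"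
      by (rule scalar_prod_add_distrib[OF xc _ d], use G xc in simp)
    hence "x \<bullet> (G *\<^sub>v x) \<le> 0" using e xd[OF xK] by simp
    hence "x \<bullet> x \<le> 0" using Kpos[OF xK] c by (smt (verit) mult_le_0_iff)
    thus ?thesis using xx xc by auto
  qed
  define e :: "real vec" where "e = unit_vec n j"
  have ec: "e \<in> carrier_vec n" unfolding e_def by simp
  have "G *\<^sub>v (A0 *\<^sub>v e) = (1\<^sub>m n - Q) *\<^sub>v e" unfolding GA[symmetric] by (rule assoc_mult_mat_vec[OF G A0 ec, symmetric])
  also have "\<dots> = e - Q *\<^sub>v e" using Q ec by (simp add: dist_vec_n[where n=n])
  also have "Q *\<^sub>v e = 0\<^sub>v n"
  proof (rule eq_vecI)
    fix i assume "i < dim_vec (0\<^sub>v n :: real vec)"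
    hence i: "i < n" by simp
    have "(Q *\<^sub>v e)$i = (\<Sum>l<n. Q$$(i,l) * e$l)" by (rule mult_vec_entry[OF Q ec i])
    also have "\<dots> = (\<Sum>l<n. if l = j then Q$$(i,l) else 0)" by (rule sum.cong, auto simp: e_def unit_vec_def)
    also have "\<dots> = Q$$(i,j)" using j by simp
    finally show "(Q *\<^sub>v e) $ i = 0\<^sub>v n $ i" using Qj[OF i] i by simp
  qed (use Q in simp)
  finally have eG: "G *\<^sub>v (A0 *\<^sub>v e) = e" using ec by simp
  have "e \<in> K_cone n G" unfolding K_cone_def range_mat_def nonneg_vec_def
    using eG[symmetric] A0 ec by (auto simp: e_def unit_vec_def)
  moreover have "e \<noteq> 0\<^sub>v n" unfolding e_def using j
    by (metis index_unit_vec(1) index_zero_vec(1) zero_neq_one)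
  ultimately have Kne: "K_cone n G \<noteq> {0\<^sub>v n}" by auto
  show ?thesis unfolding Karamardian_def using G Kne dint sol0 sold by blast
qed

end


lemma cnorm_eq: fixes z :: complex assumes h: "cmod (z + 1) = cmod z + 1"
  shows "z = of_real (cmod z)"
proof -
  have 1: "(cmod (z+1))^2 = (Re z + 1)^2 + (Im z)^2" by (simp add: cmod_power2)
  have 2: "(cmod z)^2 = (Re z)^2 + (Im z)^2" by (simp add: cmod_power2)
  have "(cmod z + 1)^2 = (Re z + 1)^2 + (Im z)^2" using 1 h by simp
  hence "Re z = cmod z" using 2 by (simp add: power2_eq_square algebra_simps)
  hence "Im z = 0" using 2 by simp
  thus ?thesis using \<open>Re z = cmod z\<close> by (simp add: complex_eq_iff)
qed

lemma map_smult_vec: fixes M :: "real mat"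
  assumes M: "M \<in> carrier_mat k k" and v: "v \<in> carrier_vec k"
  shows "map_mat complex_of_real (a \<cdot>\<^sub>m M) *\<^sub>v v = of_real a \<cdot>\<^sub>v (map_mat complex_of_real M *\<^sub>v v)"
proof (rule eq_vecI)
  fix i assume "i < dim_vec (of_real a \<cdot>\<^sub>v (map_mat complex_of_real M *\<^sub>v v))"
  hence i: "i < k" using M by simp
  show "(map_mat complex_of_real (a \<cdot>\<^sub>m M) *\<^sub>v v) $ i = (of_real a \<cdot>\<^sub>v (map_mat complex_of_real M *\<^sub>v v)) $ i"
    using mult_vec_entry[of "map_mat complex_of_real (a \<cdot>\<^sub>m M)" k v i]
      mult_vec_entry[of "map_mat complex_of_real M" k v i] M v i
    by (simp add: sum_distrib_left mult.assoc)
qed (use M v in simp)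

lemma map_plus_one_vec: fixes M :: "real mat"
  assumes M: "M \<in> carrier_mat k k" and v: "v \<in> carrier_vec k"
  shows "map_mat complex_of_real (M + 1\<^sub>m k) *\<^sub>v v = map_mat complex_of_real M *\<^sub>v v + v"
proof (rule eq_vecI)
  fix i assume "i < dim_vec (map_mat complex_of_real M *\<^sub>v v + v)"
  hence i: "i < k" using M v by simp
  have "(\<Sum>l<k. (if i = l then 1 else 0) * v $ l) = (\<Sum>l<k. if l = i then v $ l else 0)"
    by (rule sum.cong, auto)
  also have "\<dots> = v $ i" using i by simp
  finally have vsum: "(\<Sum>l<k. (if i = l then 1 else 0) * v $ l) = v $ i" .
  have "(map_mat complex_of_real (M + 1\<^sub>m k) *\<^sub>v v) $ i =
     (\<Sum>l<k. (map_mat complex_of_real (M + 1\<^sub>m k)) $$ (i,l) * v $ l)"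
    by (rule mult_vec_entry, use M v i in auto)
  also have "\<dots> = (\<Sum>l<k. (of_real (M $$ (i,l)) + (if i = l then 1 else 0)) * v $ l)"
    by (rule sum.cong, use M i in auto)
  also have "\<dots> = (\<Sum>l<k. of_real (M $$ (i,l)) * v $ l) + (\<Sum>l<k. (if i = l then 1 else 0) * v $ l)"
    by (simp only: distrib_right sum.distrib)

  also have "\<dots> = (map_mat complex_of_real M *\<^sub>v v) $ i + v $ i"
    unfolding vsum using mult_vec_entry[of "map_mat complex_of_real M" k v i] M v i by simp
  finally show "(map_mat complex_of_real (M + 1\<^sub>m k) *\<^sub>v v) $ i = (map_mat complex_of_real M *\<^sub>v v + v) $ i"
    using i v by simp
qed (use M v in simp)

lemma map_C_vec: fixes M :: "real mat"
  assumes M: "M \<in> carrier_mat k k" and v: "v \<in> carrier_vec k"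
  shows "map_mat complex_of_real (t \<cdot>\<^sub>m 1\<^sub>m k - M) *\<^sub>v v = of_real t \<cdot>\<^sub>v v - map_mat complex_of_real M *\<^sub>v v"
proof (rule eq_vecI)
  fix i assume "i < dim_vec (of_real t \<cdot>\<^sub>v v - map_mat complex_of_real M *\<^sub>v v)"
  hence i: "i < k" using v M by simp
  have "(map_mat complex_of_real (t \<cdot>\<^sub>m 1\<^sub>m k - M) *\<^sub>v v) $ i =
     (\<Sum>l<k. (map_mat complex_of_real (t \<cdot>\<^sub>m 1\<^sub>m k - M)) $$ (i,l) * v $ l)"
    by (rule mult_vec_entry, use M v i in auto)
  also have "\<dots> = (\<Sum>l<k. (if i = l then of_real t * v $ l else 0) - of_real (M $$ (i,l)) * v $ l)"
    by (rule sum.cong, use M i in \<open>auto simp: left_diff_distrib\<close>)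
  also have "\<dots> = of_real t * v $ i - (map_mat complex_of_real M *\<^sub>v v) $ i"
    using mult_vec_entry[of "map_mat complex_of_real M" k v i] M v i by (simp add: sum_subtractf)
  finally show "(map_mat complex_of_real (t \<cdot>\<^sub>m 1\<^sub>m k - M) *\<^sub>v v) $ i = (of_real t \<cdot>\<^sub>v v - map_mat complex_of_real M *\<^sub>v v) $ i"
    using i v M by simp
qed (use M v in simp)

lemma smult_smult_mat: "a \<cdot>\<^sub>m (b \<cdot>\<^sub>m (X :: real mat)) = (a * b) \<cdot>\<^sub>m X"
  by (intro eq_matI, auto)

lemma pow_smult: fixes M :: "real mat" assumes M: "M \<in> carrier_mat k k"
  shows "(a \<cdot>\<^sub>m M) ^\<^sub>m N = a ^ N \<cdot>\<^sub>m M ^\<^sub>m N"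
proof (induct N)
  case 0 then show ?case using M by (intro eq_matI, auto)
next
  case (Suc N)
  have "(a \<cdot>\<^sub>m M) ^\<^sub>m Suc N = (a ^ N \<cdot>\<^sub>m M ^\<^sub>m N) * (a \<cdot>\<^sub>m M)" using Suc by simp
  also have "\<dots> = a ^ Suc N \<cdot>\<^sub>m (M ^\<^sub>m N * M)" using M
    by (simp add: mult_smult_assoc_mat[of _ k k] mult_smult_distrib[of _ k k] smult_smult_mat)
  finally show ?case by simp
qed



lemma C_part:
  fixes C E :: "real mat" and t :: real
  assumes k: "0 < k" and E: "E \<in> carrier_mat k k"
   and rho: "rho E \<le> t" and Cdef: "C = t \<cdot>\<^sub>m 1\<^sub>m k - E" and Cinv: "invertible_mat C"
  shows "0 \<le> t"
    and "\<And>i j. i<k \<Longrightarrow> j<k \<Longrightarrow> (\<lambda>N. (((1/(t+1)) \<cdot>\<^sub>m (E + 1\<^sub>m k)) ^\<^sub>m N) $$ (i,j)) \<longlonglongrightarrow> 0"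
proof -
  let ?cm = "map_mat complex_of_real"
  have cE: "?cm E \<in> carrier_mat k k" using E by simp
  have "spectral_radius (?cm E) \<in> norm ` spectrum (?cm E)" by (rule spectral_radius_mem_max(1)[OF cE k])
  hence rho0: "0 \<le> rho E" unfolding rho_def by auto
  thus t0: "0 \<le> t" using rho by simp
  have C: "C \<in> carrier_mat k k" unfolding Cdef using E by (simp add: minus_carrier_mat)
  from Cinv obtain B where CB: "C * B = 1\<^sub>m (dim_row C)" and BC: "B * C = 1\<^sub>m (dim_row B)"
    unfolding invertible_mat_def inverts_mat_def by auto
  have "dim_col (B * C) = dim_col (1\<^sub>m (dim_row B))" using BC by simp
  hence rB: "dim_row B = k" using C by simp
  have "dim_col (C * B) = dim_col (1\<^sub>m (dim_row C))" using CB by simp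
  hence cB: "dim_col B = k" using C by simp
  have B: "B \<in> carrier_mat k k" using rB cB by auto
  have "det C * det B = 1" using det_mult[OF C B] CB C by simp
  hence detC: "det C \<noteq> 0" by auto
  define s' where "s' = t + 1"
  have s': "s' > 0" unfolding s'_def using t0 by simp
  define T2 where "T2 = (1/s') \<cdot>\<^sub>m (E + 1\<^sub>m k)"
  have T2: "T2 \<in> carrier_mat k k" unfolding T2_def using E by simp
  have eig: "cmod \<mu> < 1" if v: "v \<in> carrier_vec k" and v0: "v \<noteq> 0\<^sub>v k" and ev: "?cm T2 *\<^sub>v v = \<mu> \<cdot>\<^sub>v v" for v \<mu>
  proof -
    have e1: "?cm T2 *\<^sub>v v = of_real (1/s') \<cdot>\<^sub>v (?cm E *\<^sub>v v + v)"
      using map_smult_vec[OF _ v, of "E + 1\<^sub>m k"] map_plus_one_vec[OF E v] E unfolding T2_def by simp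
    define lam where "lam = of_real s' * \<mu> - 1"
    have Ev: "?cm E *\<^sub>v v = lam \<cdot>\<^sub>v v"
    proof (rule eq_vecI)
      fix i assume "i < dim_vec (lam \<cdot>\<^sub>v v)"
      hence i: "i < k" using v by simp
      have "(?cm T2 *\<^sub>v v) $ i = (\<mu> \<cdot>\<^sub>v v) $ i" using ev by simp
      hence "of_real (1/s') * ((?cm E *\<^sub>v v) $ i + v $ i) = \<mu> * v $ i" unfolding e1 using i v E by simp
      hence "(?cm E *\<^sub>v v) $ i + v $ i = of_real s' * \<mu> * v $ i" using s'
        by (simp add: field_simps)
      thus "(?cm E *\<^sub>v v) $ i = (lam \<cdot>\<^sub>v v) $ i" unfolding lam_def using i v by (simp add: algebra_simps)
    qed (use v E in simp)
    have "eigenvalue (?cm E) lam" unfolding eigenvalue_def eigenvector_def using Ev v v0 E by auto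
    hence "cmod lam \<le> rho E" unfolding rho_def
      by (intro spectral_radius_mem_max(2)[OF cE k], auto simp: spectrum_def)
    hence lt: "cmod lam \<le> t" using rho by simp
    have mu: "of_real s' * \<mu> = lam + 1" unfolding lam_def by simp
    have "cmod (lam + 1) \<le> cmod lam + 1" by (rule order_trans[OF norm_triangle_ineq], simp)
    hence le: "s' * cmod \<mu> \<le> s'" using lt unfolding mu[symmetric] s'_def
      by (simp add: norm_mult abs_of_nonneg t0)
    show ?thesis
    proof (rule ccontr)
      assume "\<not> cmod \<mu> < 1"
      hence "cmod \<mu> \<ge> 1" by simp
      with le s' have "cmod \<mu> = 1"
        by (metis mult_le_cancel_left_pos mult.right_neutral order_antisym)
      hence "cmod (lam + 1) = s'" unfolding mu[symmetric] using s' by (simp add: norm_mult)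
      moreover have "cmod (lam + 1) \<le> cmod lam + 1" by (rule order_trans[OF norm_triangle_ineq], simp)
      ultimately have "cmod lam = t" "cmod (lam + 1) = cmod lam + 1" using lt unfolding s'_def by auto
      hence lamt: "lam = of_real t" using cnorm_eq by metis
      have "?cm C *\<^sub>v v = of_real t \<cdot>\<^sub>v v - ?cm E *\<^sub>v v" unfolding Cdef by (rule map_C_vec[OF E v])
      also have "\<dots> = 0\<^sub>v k" unfolding Ev lamt using v by (intro eq_vecI, auto)
      finally have "det (?cm C) = 0" using v v0 det_0_iff_vec_prod_zero[of "?cm C" k] C by auto
      thus False using detC by (simp add: of_real_hom.hom_det)
    qed
  qed
  have cT2: "?cm T2 \<in> carrier_mat k k" using T2 by simp
  define r2 where "r2 = spectral_radius (?cm T2)"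
  have "r2 \<in> norm ` spectrum (?cm T2)" unfolding r2_def by (rule spectral_radius_mem_max(1)[OF cT2 k])
  then obtain \<mu> where mu: "eigenvalue (?cm T2) \<mu>" and r2mu: "r2 = cmod \<mu>" unfolding spectrum_def by auto
  have r2: "0 \<le> r2" "r2 < 1" using mu eig cT2 unfolding r2mu eigenvalue_def eigenvector_def by auto
  define r where "r = (r2 + 1) / 2"
  have r: "0 < r" "r < 1" "r2 < r" using r2 unfolding r_def by auto
  define U where "U = ?cm ((1/r) \<cdot>\<^sub>m T2)"
  have U: "U \<in> carrier_mat k k" unfolding U_def using T2 by simp
  have eigU: "cmod \<mu> < 1" if "eigenvalue U \<mu>" for \<mu>
  proof -
    from that obtain v where v: "v \<in> carrier_vec k" and v0: "v \<noteq> 0\<^sub>v k" and ev: "U *\<^sub>v v = \<mu> \<cdot>\<^sub>v v"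
      unfolding eigenvalue_def eigenvector_def using U by auto
    have e1: "U *\<^sub>v v = of_real (1/r) \<cdot>\<^sub>v (?cm T2 *\<^sub>v v)" unfolding U_def by (rule map_smult_vec[OF T2 v])
    have Tv: "?cm T2 *\<^sub>v v = (of_real r * \<mu>) \<cdot>\<^sub>v v"
    proof (rule eq_vecI)
      fix i assume "i < dim_vec ((of_real r * \<mu>) \<cdot>\<^sub>v v)"
      hence i: "i < k" using v by simp
      have "(U *\<^sub>v v) $ i = (\<mu> \<cdot>\<^sub>v v) $ i" using ev by simp
      hence "of_real (1/r) * (?cm T2 *\<^sub>v v) $ i = \<mu> * v $ i" unfolding e1 using i v T2 by simp
      thus "(?cm T2 *\<^sub>v v) $ i = ((of_real r * \<mu>) \<cdot>\<^sub>v v) $ i" using i v r by (simp add: field_simps)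
    qed (use v T2 in simp)
    have "eigenvalue (?cm T2) (of_real r * \<mu>)" unfolding eigenvalue_def eigenvector_def using Tv v v0 T2 by auto
    hence "cmod (of_real r * \<mu>) \<le> r2" unfolding r2_def
      by (intro spectral_radius_mem_max(2)[OF cT2 k], auto simp: spectrum_def)
    hence "r * cmod \<mu> \<le> r2" using r by (simp add: norm_mult)
    hence "r * cmod \<mu> < r * 1" using r by linarith
    thus ?thesis using r mult_less_cancel_left_pos by blast
  qed
  have srU: "spectral_radius U < 1"
  proof -
    have "spectral_radius U \<in> norm ` spectrum U" by (rule spectral_radius_mem_max(1)[OF U k])
    thus ?thesis using eigU unfolding spectrum_def by auto
  qed
  obtain as where "char_poly U = (\<Prod>a\<leftarrow>as. [:- a, 1:])" using char_poly_factorized[OF U] by auto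
  hence jnf: "\<exists>n_as. jordan_nf U n_as" by (rule jordan_nf_exists[OF U])
  obtain cc where cc: "\<And>N. norm_bound (U ^\<^sub>m N) cc"
    using spectral_radius_jnf_norm_bound_less_1[OF U srU jnf] by auto
  fix i j assume ij: "i < k" "j < k"
  have bnd: "norm ((T2 ^\<^sub>m N) $$ (i,j)) \<le> norm (r ^ N) * cc" for N
  proof -
    have "U ^\<^sub>m N = ?cm (((1/r) \<cdot>\<^sub>m T2) ^\<^sub>m N)" unfolding U_def
      by (rule of_real_hom.mat_hom_pow[where n=k, symmetric], use T2 in simp)
    also have "\<dots> = ?cm ((1/r)^N \<cdot>\<^sub>m T2 ^\<^sub>m N)" by (simp only: pow_smult[OF T2])
    finally have UN: "U ^\<^sub>m N = ?cm ((1/r)^N \<cdot>\<^sub>m T2 ^\<^sub>m N)" .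
    have "norm ((U ^\<^sub>m N) $$ (i,j)) \<le> cc" using cc[of N] ij U unfolding norm_bound_def by simp
    hence "norm (complex_of_real ((1/r)^N * (T2 ^\<^sub>m N) $$ (i,j))) \<le> cc" unfolding UN using ij T2 by simp
    hence "\<bar>(1/r)^N\<bar> * \<bar>(T2 ^\<^sub>m N) $$ (i,j)\<bar> \<le> cc" by (simp only: norm_of_real abs_mult)
    hence "(1/r)^N * \<bar>(T2 ^\<^sub>m N) $$ (i,j)\<bar> \<le> cc" using r by simp
    hence "r^N * ((1/r)^N * \<bar>(T2 ^\<^sub>m N) $$ (i,j)\<bar>) \<le> r^N * cc" using r by (simp add: mult_left_mono)
    hence "\<bar>(T2 ^\<^sub>m N) $$ (i,j)\<bar> \<le> r^N * cc" using r by (simp add: power_one_over field_simps)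
    thus ?thesis using r by simp
  qed
  have "(\<lambda>N. r ^ N) \<longlonglongrightarrow> 0" using r by (intro LIMSEQ_power_zero, simp)
  from tendsto_0_le[OF this always_eventually[OF allI[OF bnd]]]
  show "(\<lambda>N. (((1/(t+1)) \<cdot>\<^sub>m (E + 1\<^sub>m k)) ^\<^sub>m N) $$ (i,j)) \<longlonglongrightarrow> 0"
    unfolding T2_def s'_def .
qed



lemma diag_mult_left: fixes d :: "nat \<Rightarrow> real"
  assumes X: "X \<in> carrier_mat n n" and ij: "i < n" "j < n"
  shows "(mat n n (\<lambda>(i,j). if i = j then d i else 0) * X) $$ (i,j) = d i * X $$ (i,j)"
proof -
  have "(mat n n (\<lambda>(i,j). if i = j then d i else 0) * X) $$ (i,j) =
    (\<Sum>l<n. (mat n n (\<lambda>(i,j). if i = j then d i else 0)) $$ (i,l) * X $$ (l,j))"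
    by (rule mult_entry[OF _ X ij], simp)
  also have "\<dots> = (\<Sum>l<n. if l = i then d i * X $$ (i,j) else 0)"
    by (rule sum.cong, use ij in auto)
  finally show ?thesis using ij by simp
qed

lemma diag_mult_right: fixes d :: "nat \<Rightarrow> real"
  assumes X: "X \<in> carrier_mat n n" and ij: "i < n" "j < n"
  shows "(X * mat n n (\<lambda>(i,j). if i = j then d i else 0)) $$ (i,j) = X $$ (i,j) * d j"
proof -
  have "(X * mat n n (\<lambda>(i,j). if i = j then d i else 0)) $$ (i,j) =
    (\<Sum>l<n. X $$ (i,l) * (mat n n (\<lambda>(i,j). if i = j then d i else 0)) $$ (l,j))"
    by (rule mult_entry[OF X _ ij], simp)
  also have "\<dots> = (\<Sum>l<n. if l = j then X $$ (i,j) * d j else 0)"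
    by (rule sum.cong, use ij in auto)
  finally show ?thesis using ij by simp
qed

lemma diag_mult_vec: fixes d :: "nat \<Rightarrow> real"
  assumes x: "x \<in> carrier_vec n" and i: "i < n"
  shows "(mat n n (\<lambda>(i,j). if i = j then d i else 0) *\<^sub>v x) $ i = d i * x $ i"
proof -
  have "(mat n n (\<lambda>(i,j). if i = j then d i else 0) *\<^sub>v x) $ i =
    (\<Sum>l<n. (mat n n (\<lambda>(i,j). if i = j then d i else 0)) $$ (i,l) * x $ l)"
    by (rule mult_vec_entry[OF _ x i], simp)
  also have "\<dots> = (\<Sum>l<n. if l = i then d i * x $ i else 0)"
    by (rule sum.cong, use i in auto)
  finally show ?thesis using i by simp
qed

theorem mainTheorem11:
  fixes B C :: "real mat" and m k :: nat
  assumes "0 < m" and "0 < k"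
    and "M_matrix m B" and "property_c m B"
    and "invertible_M_matrix k C"
  defines "A \<equiv> four_block_mat B (0\<^sub>m m k) (0\<^sub>m k m) C"
  shows "(\<exists>X. group_inverse A X) \<and>
         (\<forall>X. group_inverse A X \<longrightarrow> Karamardian (m + k) X)"
proof -
  from assms(4) obtain s D where s: "s > 0" and D: "D \<in> carrier_mat m m" and Dnn: "nonneg_mat D"
    and Bdef: "B = s \<cdot>\<^sub>m 1\<^sub>m m - D" and scD: "semi_convergent m ((1 / s) \<cdot>\<^sub>m D)"
    unfolding property_c_def by auto
  from assms(5) obtain t E where E: "E \<in> carrier_mat k k" and Enn: "nonneg_mat E"
    and rhoE: "rho E \<le> t" and Cdef: "C = t \<cdot>\<^sub>m 1\<^sub>m k - E" and Cinv: "invertible_mat C"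
    unfolding invertible_M_matrix_def M_matrix_def by auto
  note Cp = C_part[OF assms(2) E rhoE Cdef Cinv]
  have t0: "0 \<le> t" by (rule Cp(1))
  define n where "n = m + k"
  define T1 where "T1 = (1 / s) \<cdot>\<^sub>m D"
  define T2 where "T2 = (1/(t+1)) \<cdot>\<^sub>m (E + 1\<^sub>m k)"
  have T1: "T1 \<in> carrier_mat m m" unfolding T1_def using D by simp
  have T2: "T2 \<in> carrier_mat k k" unfolding T2_def using E by simp
  have T2lim: "\<And>i j. i<k \<Longrightarrow> j<k \<Longrightarrow> (\<lambda>N. (T2 ^\<^sub>m N) $$ (i,j)) \<longlonglongrightarrow> 0"
    unfolding T2_def by (rule Cp(2))
  define T where "T = four_block_mat T1 (0\<^sub>m m k) (0\<^sub>m k m) T2"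
  have T: "T \<in> carrier_mat n n" unfolding T_def n_def using T1 T2 by auto
  have Tpow: "T ^\<^sub>m N = four_block_mat (T1 ^\<^sub>m N) (0\<^sub>m m k) (0\<^sub>m k m) (T2 ^\<^sub>m N)" for N
  proof (induct N)
    case 0 then show ?case unfolding T_def using T1 T2 by simp
  next
    case (Suc N)
    have "T ^\<^sub>m Suc N = four_block_mat (T1 ^\<^sub>m N) (0\<^sub>m m k) (0\<^sub>m k m) (T2 ^\<^sub>m N) * T"
      using Suc by simp
    also have "\<dots> = four_block_mat (T1 ^\<^sub>m N * T1 + 0\<^sub>m m k * 0\<^sub>m k m) (T1 ^\<^sub>m N * 0\<^sub>m m k + 0\<^sub>m m k * T2)
       (0\<^sub>m k m * T1 + T2 ^\<^sub>m N * 0\<^sub>m k m) (0\<^sub>m k m * 0\<^sub>m m k + T2 ^\<^sub>m N * T2)"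
      unfolding T_def by (rule mult_four_block_mat, use T1 T2 in auto)
    also have "\<dots> = four_block_mat (T1 ^\<^sub>m Suc N) (0\<^sub>m m k) (0\<^sub>m k m) (T2 ^\<^sub>m Suc N)"
      using T1 T2 right_add_zero_mat[OF mult_carrier_mat[OF pow_carrier_mat[OF T1] T1]]
        left_add_zero_mat[OF mult_carrier_mat[OF pow_carrier_mat[OF T2] T2]] by simp
    finally show ?case .
  qed
  have Tpow_idx: "(T ^\<^sub>m N) $$ (i,j) = (if i < m then if j < m then (T1 ^\<^sub>m N) $$ (i,j) else 0
     else if j < m then 0 else (T2 ^\<^sub>m N) $$ (i-m,j-m))" if "i < n" "j < n" for N i j
    unfolding Tpow using that T1 T2 unfolding n_def by (subst index_mat_four_block, auto)
  have T_idx: "T $$ (i,j) = (if i < m then if j < m then T1 $$ (i,j) else 0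
     else if j < m then 0 else T2 $$ (i-m,j-m))" if "i < n" "j < n" for i j
    using Tpow_idx[OF that, of 1] T1 T2 T by simp
  have Tnn: "nonneg_mat T" unfolding nonneg_mat_def
  proof (intro allI impI)
    fix i j assume "i < dim_row T" "j < dim_col T"
    hence ij: "i < n" "j < n" using T by auto
    show "0 \<le> T $$ (i,j)" unfolding T_idx[OF ij] using ij Dnn Enn s t0 D E
      unfolding T1_def T2_def n_def nonneg_mat_def by auto
  qed
  have scT: "semi_convergent n T" unfolding semi_convergent_def
  proof (intro allI impI)
    fix i j assume ij: "i < n" "j < n"
    show "convergent (\<lambda>N. (T ^\<^sub>m N) $$ (i,j))"
      unfolding Tpow_idx[OF ij]
    proof (cases "i < m"; cases "j < m")
      assume "i < m" "j < m"
      thus "convergent (\<lambda>N. if i < m then if j < m then (T1 ^\<^sub>m N) $$ (i,j) else 0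
         else if j < m then 0 else (T2 ^\<^sub>m N) $$ (i-m,j-m))"
        using scD unfolding semi_convergent_def T1_def by simp
    next
      assume "\<not> i < m" "\<not> j < m"
      hence "i - m < k" "j - m < k" using ij unfolding n_def by auto
      thus "convergent (\<lambda>N. if i < m then if j < m then (T1 ^\<^sub>m N) $$ (i,j) else 0
         else if j < m then 0 else (T2 ^\<^sub>m N) $$ (i-m,j-m))"
        using \<open>\<not> i < m\<close> \<open>\<not> j < m\<close> T2lim by (auto simp: convergent_def)
    qed (auto simp: convergent_const)
  qed
  interpret sc: semiconv n T using T Tnn scT by unfold_locales
  have mn: "m < n" unfolding n_def using assms(2) by simp
  have Qm: "sc.Q $$ (i,m) = 0" if i: "i < n" for i
  proof -
    have "(\<lambda>N. (T ^\<^sub>m N) $$ (i,m)) \<longlonglongrightarrow> 0"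
    proof (cases "i < m")
      case True thus ?thesis unfolding Tpow_idx[OF i mn] by simp
    next
      case False
      hence "i - m < k" using i unfolding n_def by auto
      thus ?thesis unfolding Tpow_idx[OF i mn] using False T2lim[of "i-m" 0] assms(2) by simp
    qed
    from LIMSEQ_unique[OF sc.Q_lim[OF i mn] this] show ?thesis .
  qed
  define sc where "sc = (\<lambda>i::nat. if i < m then s else t + 1)"
  have scpos: "sc i > 0" for i unfolding sc_def using s t0 by auto
  define S where "S = mat n n (\<lambda>(i,j). if i = j then sc i else 0)"
  define Sinv where "Sinv = mat n n (\<lambda>(i,j). if i = j then 1 / sc i else 0)"
  have S: "S \<in> carrier_mat n n" and Sinv: "Sinv \<in> carrier_mat n n" unfolding S_def Sinv_def by auto
  have SSinv: "S * Sinv = 1\<^sub>m n"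
  proof (rule eq_matI)
    fix i j assume "i < dim_row (1\<^sub>m n)" "j < dim_col (1\<^sub>m n)"
    hence ij: "i < n" "j < n" by auto
    show "(S * Sinv) $$ (i,j) = 1\<^sub>m n $$ (i,j)" unfolding S_def diag_mult_left[OF Sinv ij]
      unfolding Sinv_def using ij scpos[of i] scpos[of j] by simp
  qed (use S Sinv in auto)
  have SinvS: "Sinv * S = 1\<^sub>m n"
  proof (rule eq_matI)
    fix i j assume "i < dim_row (1\<^sub>m n)" "j < dim_col (1\<^sub>m n)"
    hence ij: "i < n" "j < n" by auto
    show "(Sinv * S) $$ (i,j) = 1\<^sub>m n $$ (i,j)" unfolding Sinv_def diag_mult_left[OF S ij]
      unfolding S_def using ij scpos[of i] scpos[of j] by simp
  qed (use S Sinv in auto)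
  have ST: "S * T = T * S"
  proof (rule eq_matI)
    fix i j assume "i < dim_row (T * S)" "j < dim_col (T * S)"
    hence ij: "i < n" "j < n" using T S by auto
    show "(S * T) $$ (i,j) = (T * S) $$ (i,j)" unfolding S_def diag_mult_left[OF T ij] diag_mult_right[OF T ij]
      unfolding T_idx[OF ij] sc_def by auto
  qed (use S T in auto)
  have Sinv_nn: "nonneg_mat Sinv" unfolding nonneg_mat_def Sinv_def using scpos
    by (auto simp: less_imp_le)
  define c where "c = min (1/s) (1/(t+1))"
  have c: "c > 0" unfolding c_def using s t0 by auto
  have csc: "c \<le> 1 / sc i" for i unfolding c_def sc_def by auto
  have Sinv_quad: "c * (x \<bullet> x) \<le> x \<bullet> (Sinv *\<^sub>v x)" if x: "x \<in> carrier_vec n" for x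
  proof -
    have "c * (x \<bullet> x) = (\<Sum>i\<in>{0..<n}. c * (x $ i * x $ i))"
      unfolding scalar_prod_def using x by (simp add: sum_distrib_left)
    also have "\<dots> \<le> (\<Sum>i\<in>{0..<n}. x $ i * (1 / sc i * x $ i))"
    proof (rule sum_mono)
      fix i assume "i \<in> {0..<n}"
      have "c * (x $ i * x $ i) \<le> 1 / sc i * (x $ i * x $ i)"
        by (rule mult_right_mono[OF csc], simp)
      thus "c * (x $ i * x $ i) \<le> x $ i * (1 / sc i * x $ i)" by (simp add: algebra_simps)
    qed
    also have "\<dots> = (\<Sum>i\<in>{0..<n}. x $ i * (Sinv *\<^sub>v x) $ i)"
      unfolding Sinv_def by (rule sum.cong, simp, subst diag_mult_vec[OF x], auto)
    also have "\<dots> = x \<bullet> (Sinv *\<^sub>v x)" unfolding scalar_prod_def using Sinv by simp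
    finally show ?thesis .
  qed
  interpret scS: semiconv_S n T S Sinv c
    using S Sinv SSinv SinvS ST Sinv_nn c Sinv_quad by unfold_locales auto
  have B: "B \<in> carrier_mat m m" unfolding Bdef using D by (simp add: minus_carrier_mat)
  have C: "C \<in> carrier_mat k k" unfolding Cdef using E by (simp add: minus_carrier_mat)
  have A: "A \<in> carrier_mat n n" unfolding A_def n_def using B C by auto
  have AS: "A = scS.A0"
  proof (rule eq_matI)
    fix i j assume "i < dim_row scS.A0" "j < dim_col scS.A0"
    hence ij: "i < n" "j < n" using scS.A0 by auto
    have t1: "1 + t \<noteq> 0" "t + 1 \<noteq> 0" using t0 by auto
    define dl :: real where "dl = (if i = j then 1 else 0)"
    have "scS.A0 $$ (i,j) = (S * sc.P) $$ (i,j)" unfolding scS.A0_def ..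
    also have "\<dots> = sc i * (sc.P $$ (i,j))" unfolding S_def
      by (rule diag_mult_left[OF sc.P ij])
    also have "\<dots> = sc i * (dl - T $$ (i,j))" unfolding sc.P_def dl_def using ij T by simp
    also have "\<dots> = A $$ (i,j)"
    proof -
      have a1: "s * (d - 1/s * e) = s * d - e" for d e using s by (simp add: field_simps)
      have a2: "(t+1) * (d - 1/(t+1) * (e + d)) = t * d - e" for d e using t1 by (simp add: field_simps)
      have Aidx: "A $$ (i,j) = (if i < m then if j < m then B $$ (i,j) else 0
          else if j < m then 0 else C $$ (i-m,j-m))"
        unfolding A_def using ij B C unfolding n_def by (subst index_mat_four_block, auto)
      show ?thesis
      proof (cases "i < m"; cases "j < m")
        assume ijm: "i < m" "j < m"
        have 1: "T $$ (i,j) = 1/s * D $$ (i,j)" using T_idx[OF ij] ijm D by (simp add: T1_def)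
        have 2: "A $$ (i,j) = s * dl - D $$ (i,j)" using Aidx ijm D by (simp add: Bdef dl_def)
        have 3: "sc i = s" using ijm by (simp add: sc_def)
        show ?thesis unfolding 1 2 3 by (rule a1)
      next
        assume ijm: "\<not> i < m" "\<not> j < m"
        hence k: "i - m < k" "j - m < k" "(i - m = j - m) = (i = j)" using ij unfolding n_def by auto
        have 1: "T $$ (i,j) = 1/(t+1) * (E $$ (i-m,j-m) + dl)" using T_idx[OF ij] ijm k E
          by (simp add: T2_def dl_def)
        have 2: "A $$ (i,j) = t * dl - E $$ (i-m,j-m)" using Aidx ijm k E by (simp add: Cdef dl_def)
        have 3: "sc i = t + 1" using ijm by (simp add: sc_def)
        show ?thesis unfolding 1 2 3 by (rule a2)
      next
        assume ijm: "i < m" "\<not> j < m"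
        thus ?thesis using Aidx T_idx[OF ij] by (simp add: dl_def)
      next
        assume ijm: "\<not> i < m" "j < m"
        thus ?thesis using Aidx T_idx[OF ij] by (simp add: dl_def)
      qed
    qed
    finally show "A $$ (i,j) = scS.A0 $$ (i,j)" by simp
  qed (use A scS.A0 in auto)
  have rowA: "dim_row A = n" using A by simp
  show ?thesis
  proof (intro conjI allI impI)
    show "\<exists>X. group_inverse A X" using scS.group_inv AS by metis
    fix X assume X: "group_inverse A X"
    have gi: "group_inverse A scS.G" using scS.group_inv AS by simp
    have Xc: "X \<in> carrier_mat n n" and X1: "A * X * A = A" and X2: "X * A * X = X" and X3: "A * X = X * A"
      using X unfolding group_inverse_def rowA by auto
    have Gc: "scS.G \<in> carrier_mat n n" and G1: "A * scS.G * A = A" and G2: "scS.G * A * scS.G = scS.G"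
      and G3: "A * scS.G = scS.G * A"
      using gi unfolding group_inverse_def rowA by auto
    have "X = scS.G" by (rule group_inverse_unique[OF A Xc Gc X1 X2 X3 G1 G2 G3])
    thus "Karamardian (m + k) X" using scS.Karam[OF mn Qm] unfolding n_def by simp
  qed
qed


end
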